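(* There is a polynomial $p$ such that for all integers $N\geq1$, all reals $c$, all $\delta\in(0,1]$ and $\varepsilon>0$: if $V\subseteq\{0,1\}^N$ is nonempty and for every $v\in V$ the set $\{u\in V:d_H(v,u)\geq cN\}$ has size at least $\delta|V|$, then there is $X\subseteq V$ with $|X|\leq p(1/\varepsilon,1/\delta)$ such that for every $v\in V$ there is $x\in X$ with $d_H(x,v)\geq(c-\varepsilon)N$.
   Context: $d_H$ denotes the Hamming distance on $\{0,1\}^N$. The polynomial $p$ does not depend on $N$, $V$ or $c$. *)

theory Defs
  imports Main "HOL.Real"
begin

text \<open>Points of the hypercube {0,1}^N are boolean lists of length N.\<close>
definition hamming :: "bool list \<Rightarrow> bool list \<Rightarrow> nat" where
  "hamming u v = card {i. i < length u \<and> i < length v \<and> u ! i \<noteq> v ! i}"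

definition bipoly :: "nat \<Rightarrow> (nat \<Rightarrow> nat \<Rightarrow> real) \<Rightarrow> real \<Rightarrow> real \<Rightarrow> real" where
  "bipoly d coef a b = (\<Sum>i\<le>d. \<Sum>j\<le>d. coef i j * a ^ i * b ^ j)"

end

theory Submission
  imports Defs Complex_Main "HOL-Library.FuncSet"
begin


lemma exp_neg_quad:
  fixes s :: real assumes "0 \<le> s" shows "exp (-s) \<le> 1 - s + s^2/2"
proof -
  define f where "f = (\<lambda>x::real. 1 - x + x^2/2 - exp (-x))"
  have "f 0 \<le> f s"
  proof (rule DERIV_nonneg_imp_nondecreasing[OF assms])
    fix x :: real assume "0 \<le> x" "x \<le> s"
    have "DERIV f x :> (-1 + x + exp (-x))"
      unfolding f_def by (auto intro!: derivative_eq_intros)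
    moreover have "-1 + x + exp (-x) \<ge> 0" using exp_ge_add_one_self[of "-x"] by linarith
    ultimately show "\<exists>y. DERIV f x :> y \<and> y \<ge> 0" by blast
  qed
  then show ?thesis unfolding f_def by simp
qed



lemma tail_count:
  fixes N m :: nat and D :: "nat set" and t :: real
  assumes N: "N \<ge> 1" and D: "D \<subseteq> {..<N}" and t: "t \<ge> 0"
  shows "real (card {S \<in> PiE {..<m} (\<lambda>_. {..<N}). real (card {j\<in>{..<m}. S j \<in> D}) \<le> (real (card D)/N - t) * m})
          \<le> real N ^ m * exp (- real m * t^2/2)"
proof -
  define SS where "SS = PiE {..<m} (\<lambda>_. {..<N})"
  define cnt where "cnt S = card {j\<in>{..<m}. S j \<in> D}" for S :: "nat \<Rightarrow> nat"
  define w where "w i = (if i \<in> D then exp (-t) else 1)" for i :: nat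
  define p where "p = real (card D) / N"
  define T where "T = {S \<in> SS. real (cnt S) \<le> (p - t) * m}"
  have finSS: "finite SS" unfolding SS_def by (simp add: finite_PiE)
  have finD: "finite D" using D finite_subset by blast
  have cardD: "card D \<le> N" using card_mono[OF _ D] by simp
  have p0: "0 \<le> p" and p1: "p \<le> 1" unfolding p_def using cardD N by (auto simp: divide_simps)
  have cnt_eq: "real (cnt S) = (\<Sum>j<m. if S j \<in> D then 1 else 0)" for S
    unfolding cnt_def by (simp add: sum.If_cases Int_def conj_commute)
  have eS: "exp (- t * real (cnt S)) = (\<Prod>j<m. w (S j))" for S
  proof -
    have "exp (- t * real (cnt S)) = exp (\<Sum>j<m. - t * (if S j \<in> D then 1 else 0))"
      by (simp add: cnt_eq sum_distrib_left)
    also have "\<dots> = (\<Prod>j<m. exp (- t * (if S j \<in> D then 1 else 0)))"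
      by (simp add: exp_sum)
    also have "\<dots> = (\<Prod>j<m. w (S j))" by (rule prod.cong) (auto simp: w_def)
    finally show ?thesis .
  qed
  have sumall: "(\<Sum>S\<in>SS. exp (- t * real (cnt S))) = (\<Sum>i<N. w i) ^ m"
  proof -
    have "(\<Sum>S\<in>SS. exp (- t * real (cnt S))) = (\<Sum>S\<in>SS. \<Prod>j<m. w (S j))" using eS by presburger
    also have "\<dots> = (\<Prod>j<m. \<Sum>i<N. w i)"
      unfolding SS_def by (rule prod_sum_PiE[symmetric]) auto
    also have "\<dots> = (\<Sum>i<N. w i) ^ m" by simp
    finally show ?thesis .
  qed
  have sumw: "(\<Sum>i<N. w i) = N * (1 - p + p * exp (-t))"
  proof -
    have "(\<Sum>i<N. w i) = (\<Sum>i\<in>{..<N} \<inter> D. exp (-t)) + (\<Sum>i\<in>{..<N} - D. 1)"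
      unfolding w_def by (simp add: sum.If_cases Diff_eq)
    also have "{..<N} \<inter> D = D" using D by blast
    finally have e1: "(\<Sum>i<N. w i) = (\<Sum>i\<in>D. exp (-t)) + (\<Sum>i\<in>{..<N} - D. 1)" .
    have "card ({..<N} - D) = N - card D" using D finD by (simp add: card_Diff_subset)
    with e1 have "(\<Sum>i<N. w i) = card D * exp (-t) + real (N - card D)" by simp
    also have "\<dots> = N * (1 - p + p * exp (-t))"
      using N cardD unfolding p_def by (simp add: of_nat_diff field_simps)
    finally show ?thesis .
  qed
  have Tsub: "T \<subseteq> SS" unfolding T_def by blast
  have "real (card T) * exp (- t * ((p - t) * m)) = (\<Sum>S\<in>T. exp (- t * ((p - t) * m)))" by simp
  also have "\<dots> \<le> (\<Sum>S\<in>T. exp (- t * real (cnt S)))"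
  proof (rule sum_mono)
    fix S assume "S \<in> T"
    then have "real (cnt S) \<le> (p - t) * m" unfolding T_def by blast
    then have "t * real (cnt S) \<le> t * ((p - t) * m)" using t by (rule mult_left_mono)
    then show "exp (- t * ((p - t) * m)) \<le> exp (- t * real (cnt S))" by simp
  qed
  also have "\<dots> \<le> (\<Sum>S\<in>SS. exp (- t * real (cnt S)))"
    by (rule sum_mono2[OF finSS Tsub]) auto
  also have "\<dots> = (real N * (1 - p + p * exp (-t))) ^ m" by (simp only: sumall sumw)
  also have "\<dots> = real N ^ m * (1 - p + p * exp (-t)) ^ m" by (simp add: power_mult_distrib)
  also have "\<dots> \<le> real N ^ m * exp (- p * t + t^2/2) ^ m"
  proof (rule mult_left_mono[OF power_mono])
    have "1 - p + p * exp (-t) \<le> 1 - p + p * (1 - t + t^2/2)"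
      using exp_neg_quad[OF t] p0 by (simp add: mult_left_mono)
    also have "\<dots> = 1 + (- p * t + p * t^2/2)" by (simp add: algebra_simps)
    also have "\<dots> \<le> exp (- p * t + p * t^2/2)" by (rule exp_ge_add_one_self)
    also have "\<dots> \<le> exp (- p * t + t^2/2)"
      using p1 mult_right_mono[OF p1, of "t^2"] by simp
    finally show "1 - p + p * exp (-t) \<le> exp (- p * t + t^2/2)" .
    show "0 \<le> 1 - p + p * exp (-t)" using p0 p1 by (simp add: add_nonneg_nonneg)
  qed simp
  finally have A: "real (card T) * exp (- t * ((p - t) * m)) \<le> real N ^ m * exp (- p * t + t^2/2) ^ m" .
  have E: "exp (- p * t + t^2/2) ^ m * exp (t * ((p - t) * m)) = exp (- real m * t^2/2)"
    by (simp add: exp_of_nat_mult[symmetric] flip: exp_add) (simp add: algebra_simps power2_eq_square)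
  have "real (card T) = real (card T) * exp (- t * ((p - t) * m)) * exp (t * ((p - t) * m))"
    by (simp add: exp_minus_inverse mult.assoc flip: exp_add)
  also have "\<dots> \<le> real N ^ m * exp (- p * t + t^2/2) ^ m * exp (t * ((p - t) * m))"
    using A by (simp add: mult_right_mono)
  also have "\<dots> = real N ^ m * exp (- real m * t^2/2)" using E by (simp add: mult.assoc)
  finally have "real (card T) \<le> real N ^ m * exp (- real m * t^2/2)" .
  then show ?thesis unfolding T_def cnt_def p_def SS_def by simp
qed



definition dS :: "nat \<Rightarrow> (nat \<Rightarrow> nat) \<Rightarrow> bool list \<Rightarrow> bool list \<Rightarrow> nat" where
  "dS m S u v = card {j\<in>{..<m}. u ! S j \<noteq> v ! S j}"

lemma tail_lower:
  fixes N m :: nat and c t :: real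
  assumes N: "N \<ge> 1" and len: "length u = N" "length v = N" and t: "t \<ge> 0"
    and far: "real (hamming u v) \<ge> c * N"
  shows "real (card {S \<in> PiE {..<m} (\<lambda>_. {..<N}). real (dS m S u v) < (c - t) * m})
          \<le> real N ^ m * exp (- real m * t^2/2)"
proof -
  define D where "D = {i. i < N \<and> u ! i \<noteq> v ! i}"
  have D: "D \<subseteq> {..<N}" unfolding D_def by auto
  have hD: "hamming u v = card D" unfolding hamming_def D_def using len by simp
  have cN: "c \<le> real (card D) / N" using far N hD by (simp add: field_simps)
  have "{S \<in> PiE {..<m} (\<lambda>_. {..<N}). real (dS m S u v) < (c - t) * m}
     \<subseteq> {S \<in> PiE {..<m} (\<lambda>_. {..<N}). real (card {j\<in>{..<m}. S j \<in> D}) \<le> (real (card D)/N - t) * m}"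
  proof safe
    fix S assume S: "S \<in> PiE {..<m} (\<lambda>_. {..<N})" and lt: "real (dS m S u v) < (c - t) * m"
    have "{j\<in>{..<m}. S j \<in> D} = {j\<in>{..<m}. u ! S j \<noteq> v ! S j}"
      using S unfolding D_def by (auto simp: PiE_def Pi_def)
    then have "card {j\<in>{..<m}. S j \<in> D} = dS m S u v" unfolding dS_def by simp
    moreover have "(c - t) * m \<le> (real (card D)/N - t) * m"
      using cN by (intro mult_right_mono) auto
    ultimately show "real (card {j\<in>{..<m}. S j \<in> D}) \<le> (real (card D)/N - t) * m" using lt by simp
  qed
  then have "card {S \<in> PiE {..<m} (\<lambda>_. {..<N}). real (dS m S u v) < (c - t) * m}
     \<le> card {S \<in> PiE {..<m} (\<lambda>_. {..<N}). real (card {j\<in>{..<m}. S j \<in> D}) \<le> (real (card D)/N - t) * m}"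
    by (rule card_mono[rotated]) (simp add: finite_PiE)
  also note tail_count[OF N D t, of m]
  finally show ?thesis by simp
qed

lemma tail_upper:
  fixes N m :: nat and c t :: real
  assumes N: "N \<ge> 1" and len: "length u = N" "length v = N" and t: "t \<ge> 0"
    and near: "real (hamming u v) \<le> c * N"
  shows "real (card {S \<in> PiE {..<m} (\<lambda>_. {..<N}). real (dS m S u v) \<ge> (c + t) * m})
          \<le> real N ^ m * exp (- real m * t^2/2)"
proof -
  define D where "D = {i. i < N \<and> u ! i = v ! i}"
  define D' where "D' = {i. i < N \<and> u ! i \<noteq> v ! i}"
  have D: "D \<subseteq> {..<N}" unfolding D_def by auto
  have hD: "hamming u v = card D'" unfolding hamming_def D'_def using len by simp
  have part: "{..<N} = D \<union> D'" "D \<inter> D' = {}" unfolding D_def D'_def by auto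
  have cs: "card {..<N} = card D + card D'" unfolding part(1) by (rule card_Un_disjoint) (use part D_def D'_def in auto)
  then have cD: "card D = N - hamming u v" using hD by simp
  have hN: "hamming u v \<le> N" using hD cs by simp
  have cN: "1 - c \<le> real (card D) / N" using near N cD hN by (simp add: field_simps of_nat_diff)
  have "{S \<in> PiE {..<m} (\<lambda>_. {..<N}). real (dS m S u v) \<ge> (c + t) * m}
     \<subseteq> {S \<in> PiE {..<m} (\<lambda>_. {..<N}). real (card {j\<in>{..<m}. S j \<in> D}) \<le> (real (card D)/N - t) * m}"
  proof safe
    fix S assume S: "S \<in> PiE {..<m} (\<lambda>_. {..<N})" and ge: "real (dS m S u v) \<ge> (c + t) * m"
    have e1: "{j\<in>{..<m}. S j \<in> D} = {j\<in>{..<m}. u ! S j = v ! S j}"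
      using S unfolding D_def by (auto simp: PiE_def Pi_def)
    have "{..<m} = {j\<in>{..<m}. u ! S j = v ! S j} \<union> {j\<in>{..<m}. u ! S j \<noteq> v ! S j}" by auto
    then have "card {..<m} = card ({j\<in>{..<m}. u ! S j = v ! S j} \<union> {j\<in>{..<m}. u ! S j \<noteq> v ! S j})" by (rule arg_cong)
    also have "\<dots> = card {j\<in>{..<m}. u ! S j = v ! S j} + card {j\<in>{..<m}. u ! S j \<noteq> v ! S j}"
      by (rule card_Un_disjoint) auto
    finally have "m = card {j\<in>{..<m}. u ! S j = v ! S j} + card {j\<in>{..<m}. u ! S j \<noteq> v ! S j}" by simp
    then have "real (card {j\<in>{..<m}. S j \<in> D}) = real m - real (dS m S u v)" unfolding e1 dS_def by simp
    also have "\<dots> \<le> (1 - c - t) * m" using ge by (simp add: algebra_simps)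
    also have "\<dots> \<le> (real (card D)/N - t) * m"
      using cN by (intro mult_right_mono) auto
    finally show "real (card {j\<in>{..<m}. S j \<in> D}) \<le> (real (card D)/N - t) * m" .
  qed
  then have "card {S \<in> PiE {..<m} (\<lambda>_. {..<N}). real (dS m S u v) \<ge> (c + t) * m}
     \<le> card {S \<in> PiE {..<m} (\<lambda>_. {..<N}). real (card {j\<in>{..<m}. S j \<in> D}) \<le> (real (card D)/N - t) * m}"
    by (rule card_mono[rotated]) (simp add: finite_PiE)
  also note tail_count[OF N D t, of m]
  finally show ?thesis by simp
qed



lemma card_filter_sum: "finite A \<Longrightarrow> real (card {x\<in>A. P x}) = (\<Sum>x\<in>A. if P x then 1 else 0)"
  by (simp add: sum.If_cases Int_def conj_commute)

lemma hamming_sym: "hamming u v = hamming v u"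
  unfolding hamming_def by (metis (no_types, lifting) Collect_cong)

lemma main_count:
  fixes N m k :: nat and c \<delta> \<epsilon> :: real and V :: "bool list set"
  assumes N: "N \<ge> 1" and VN: "V \<subseteq> {xs. length xs = N}" and Vne: "V \<noteq> {}"
    and \<delta>: "\<delta> > 0" and \<delta>1: "\<delta> \<le> 1" and \<epsilon>: "\<epsilon> > 0"
    and far: "\<forall>v\<in>V. real (card {u\<in>V. real (hamming v u) \<ge> c * real N}) \<ge> \<delta> * real (card V)"
    and h1: "exp (- real m * (\<epsilon>/2)^2/2) \<le> 1/4"
    and h2: "real k * exp (- real m * (\<epsilon>/2)^2/2) \<le> \<delta>/4"
    and h3: "2 ^ m * (1 - \<delta>/4) ^ k < \<delta>/4"
  shows "\<exists>x \<in> PiE {..<k} (\<lambda>_. V). \<forall>v\<in>V. \<exists>j<k. real (hamming (x j) v) \<ge> (c - \<epsilon>) * N"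
proof (rule ccontr)
  assume contra: "\<not> ?thesis"
  define SS where "SS = PiE {..<m} (\<lambda>_. {..<N})"
  define XX where "XX = PiE {..<k} (\<lambda>_. V)"
  define PP where "PP = PiE {..<m} (\<lambda>_. UNIV :: bool set)"
  define \<tau> where "\<tau> = (c - \<epsilon>/2) * m"
  define \<eta> where "\<eta> = exp (- real m * (\<epsilon>/2)^2/2)"
  define n where "n = card V"
  define dP where "dP S u p = card {j\<in>{..<m}. u ! S j \<noteq> p j}" for S :: "nat \<Rightarrow> nat" and u :: "bool list" and p :: "nat \<Rightarrow> bool"
  define G where "G S p = {u\<in>V. real (dP S u p) \<ge> \<tau>}" for S p
  define E where "E S x = (\<exists>p\<in>PP. real (card (G S p)) \<ge> \<delta>/4 * n \<and> (\<forall>j<k. x j \<notin> G S p))" for S x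
  have finV: "finite V" 
  proof (rule finite_subset[OF VN])
    show "finite {xs :: bool list. length xs = N}" using finite_lists_length_eq[of "UNIV :: bool set" N] by simp
  qed
  have n0: "n > 0" unfolding n_def using finV Vne by (simp add: card_gt_0_iff)
  have finSS: "finite SS" unfolding SS_def by (simp add: finite_PiE)
  have finXX: "finite XX" unfolding XX_def using finV by (simp add: finite_PiE)
  have finPP: "finite PP" unfolding PP_def by (simp add: finite_PiE)
  have cardSS: "card SS = N ^ m" unfolding SS_def by (simp add: card_PiE)
  have cardXX: "card XX = n ^ k" unfolding XX_def n_def by (simp add: card_PiE)
  have cardPP: "card PP = 2 ^ m" unfolding PP_def by (simp add: card_PiE)
  have \<eta>0: "\<eta> \<ge> 0" unfolding \<eta>_def by simp
  have claimA: "real (card {x\<in>XX. E S x}) \<le> 2 ^ m * (n * (1 - \<delta>/4)) ^ k" for S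
  proof -
    define PP' where "PP' = {p\<in>PP. real (card (G S p)) \<ge> \<delta>/4 * n}"
    have sub: "{x\<in>XX. E S x} \<subseteq> (\<Union>p\<in>PP'. PiE {..<k} (\<lambda>_. V - G S p))"
      unfolding E_def PP'_def XX_def by (auto simp: PiE_def Pi_def)
    have "card {x\<in>XX. E S x} \<le> card (\<Union>p\<in>PP'. PiE {..<k} (\<lambda>_. V - G S p))"
      by (rule card_mono[OF _ sub]) (use finV PP'_def finPP in \<open>auto simp: finite_PiE\<close>)
    also have "\<dots> \<le> (\<Sum>p\<in>PP'. card (PiE {..<k} (\<lambda>_. V - G S p)))"
      by (rule card_UN_le) (use PP'_def finPP in auto)
    finally have "real (card {x\<in>XX. E S x}) \<le> (\<Sum>p\<in>PP'. real (card (PiE {..<k} (\<lambda>_. V - G S p))))"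
      by (simp flip: of_nat_sum)
    also have "\<dots> \<le> (\<Sum>p\<in>PP'. (n * (1 - \<delta>/4)) ^ k)"
    proof (rule sum_mono)
      fix p assume p: "p \<in> PP'"
      have GV: "G S p \<subseteq> V" unfolding G_def by auto
      have "real (card (PiE {..<k} (\<lambda>_. V - G S p))) = real (card (V - G S p)) ^ k"
        by (simp add: card_PiE)
      also have "real (card (V - G S p)) = n - real (card (G S p))"
        unfolding n_def using GV finV by (simp add: card_Diff_subset of_nat_diff card_mono finite_subset)
      also have "(n - real (card (G S p))) ^ k \<le> (n * (1 - \<delta>/4)) ^ k"
        by (rule power_mono) (use p PP'_def GV finV n_def card_mono in \<open>auto simp: algebra_simps\<close>)
      finally show "real (card (PiE {..<k} (\<lambda>_. V - G S p))) \<le> (n * (1 - \<delta>/4)) ^ k" .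
    qed
    also have "\<dots> = card PP' * (n * (1 - \<delta>/4)) ^ k" by simp
    also have "\<dots> \<le> card PP * (n * (1 - \<delta>/4)) ^ k"
    proof (rule mult_right_mono)
      show "real (card PP') \<le> real (card PP)" unfolding PP'_def by (simp add: card_mono finPP)
      show "0 \<le> (n * (1 - \<delta>/4)) ^ k" using \<delta>1 by simp
    qed
    finally show ?thesis unfolding cardPP by simp
  qed
  have claimB: "real (card {S\<in>SS. E S x}) \<ge> \<delta>/4 * real N ^ m"
    if x: "x \<in> XX" and v: "v \<in> V" and bad: "\<forall>j<k. real (hamming (x j) v) < (c - \<epsilon>) * N" for x v
  proof -
    define pat where "pat S = restrict (\<lambda>j. v ! S j) {..<m}" for S :: "nat \<Rightarrow> nat"
    have patPP: "pat S \<in> PP" for S unfolding pat_def PP_def by simp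
    have dPeq: "dP S u (pat S) = dS m S u v" for S u
      unfolding dP_def dS_def pat_def by (rule arg_cong[where f=card]) auto
    have lenv: "length v = N" using v VN by auto
    have lenx: "length (x j) = N" if "j < k" for j using x that VN unfolding XX_def by (auto simp: PiE_def Pi_def)
    define T1 where "T1 = {S\<in>SS. real (card (G S (pat S))) \<ge> \<delta>/4 * n}"
    define T2 where "T2 = {S\<in>SS. \<exists>j<k. real (dS m S (x j) v) \<ge> \<tau>}"
    have sub: "T1 - T2 \<subseteq> {S\<in>SS. E S x}"
    proof safe
      fix S assume "S \<in> T1" "S \<notin> T2"
      then have S: "S \<in> SS" and c1: "real (card (G S (pat S))) \<ge> \<delta>/4 * n"
        and c2: "\<forall>j<k. real (dS m S (x j) v) < \<tau>" unfolding T1_def T2_def by auto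
      show "S \<in> SS" by fact
      show "E S x" unfolding E_def
      proof (rule bexI[OF _ patPP[of S]], intro conjI c1 allI impI)
        fix j assume "j < k"
        then show "x j \<notin> G S (pat S)" using c2 by (auto simp: G_def dPeq)
      qed
    qed
    have T2le: "real (card T2) \<le> k * (real N ^ m * \<eta>)"
    proof -
      have "T2 = (\<Union>j<k. {S\<in>SS. real (dS m S (x j) v) \<ge> \<tau>})" unfolding T2_def by auto
      then have "card T2 \<le> (\<Sum>j<k. card {S\<in>SS. real (dS m S (x j) v) \<ge> \<tau>})"
        by (simp add: card_UN_le)
      then have "real (card T2) \<le> (\<Sum>j<k. real (card {S\<in>SS. real (dS m S (x j) v) \<ge> \<tau>}))"
        by (simp flip: of_nat_sum)
      also have "\<dots> \<le> (\<Sum>j<k. real N ^ m * \<eta>)"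
      proof (rule sum_mono)
        fix j assume "j \<in> {..<k}"
        then have j: "j < k" by simp
        have "real (hamming (x j) v) \<le> (c - \<epsilon>) * N" using bad j by (simp add: less_imp_le)
        from tail_upper[OF N lenx[OF j] lenv _ this, of "\<epsilon>/2" m] \<epsilon>
        show "real (card {S\<in>SS. real (dS m S (x j) v) \<ge> \<tau>}) \<le> real N ^ m * \<eta>"
          unfolding SS_def \<tau>_def \<eta>_def by (simp add: algebra_simps)
      qed
      finally show ?thesis by simp
    qed
    define F where "F = {u\<in>V. real (hamming v u) \<ge> c * real N}"
    have Fsub: "F \<subseteq> V" unfolding F_def by auto
    have cardF: "real (card F) \<ge> \<delta> * n" using far v unfolding F_def n_def by auto
    have goodu: "real (card {S\<in>SS. \<tau> \<le> real (dS m S u v)}) \<ge> real N ^ m * (1 - \<eta>)" if u: "u \<in> F" for u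
    proof -
      have lenu: "length u = N" using u Fsub VN by auto
      have hu: "real (hamming u v) \<ge> c * N" using u unfolding F_def by (simp add: hamming_sym)
      have lo: "real (card {S\<in>SS. real (dS m S u v) < \<tau>}) \<le> real N ^ m * \<eta>"
        using tail_lower[OF N lenu lenv _ hu, of "\<epsilon>/2" m] \<epsilon> unfolding SS_def \<tau>_def \<eta>_def by simp
      have "card SS = card {S\<in>SS. real (dS m S u v) < \<tau>} + card {S\<in>SS. \<tau> \<le> real (dS m S u v)}"
      proof -
        have "SS = {S\<in>SS. real (dS m S u v) < \<tau>} \<union> {S\<in>SS. \<tau> \<le> real (dS m S u v)}" by auto
        then have "card SS = card ({S\<in>SS. real (dS m S u v) < \<tau>} \<union> {S\<in>SS. \<tau> \<le> real (dS m S u v)})"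
          by (rule arg_cong)
        also have "\<dots> = card {S\<in>SS. real (dS m S u v) < \<tau>} + card {S\<in>SS. \<tau> \<le> real (dS m S u v)}"
          by (rule card_Un_disjoint) (use finSS in auto)
        finally show ?thesis .
      qed
      then have r1: "real (card SS) = real (card {S\<in>SS. real (dS m S u v) < \<tau>}) + real (card {S\<in>SS. \<tau> \<le> real (dS m S u v)})"
        by (simp only: of_nat_add[symmetric])
      have "real (card SS) = real N ^ m" by (simp add: cardSS)
      with r1 have "real N ^ m = real (card {S\<in>SS. real (dS m S u v) < \<tau>}) + real (card {S\<in>SS. \<tau> \<le> real (dS m S u v)})"
        by simp
      then have "real (card {S\<in>SS. \<tau> \<le> real (dS m S u v)}) = real N ^ m - real (card {S\<in>SS. real (dS m S u v) < \<tau>})"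
        by simp
      then show ?thesis using lo by (simp add: algebra_simps)
    qed
    have swap: "(\<Sum>S\<in>SS. real (card (G S (pat S)))) = (\<Sum>u\<in>V. real (card {S\<in>SS. \<tau> \<le> real (dS m S u v)}))"
    proof -
      have "(\<Sum>S\<in>SS. real (card (G S (pat S)))) = (\<Sum>S\<in>SS. \<Sum>u\<in>V. if \<tau> \<le> real (dS m S u v) then 1 else 0)"
        by (rule sum.cong) (auto simp: G_def dPeq card_filter_sum[OF finV])
      also have "\<dots> = (\<Sum>u\<in>V. \<Sum>S\<in>SS. if \<tau> \<le> real (dS m S u v) then 1 else 0)" by (rule sum.swap)
      also have "\<dots> = (\<Sum>u\<in>V. real (card {S\<in>SS. \<tau> \<le> real (dS m S u v)}))"
        by (rule sum.cong) (auto simp: card_filter_sum[OF finSS])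
      finally show ?thesis .
    qed
    have lower: "(\<Sum>S\<in>SS. real (card (G S (pat S)))) \<ge> \<delta> * n * (real N ^ m * (1 - \<eta>))"
    proof -
      have "\<delta> * n * (real N ^ m * (1 - \<eta>)) \<le> real (card F) * (real N ^ m * (1 - \<eta>))"
        by (rule mult_right_mono[OF cardF]) (use h1 \<eta>_def in simp)
      also have "\<dots> = (\<Sum>u\<in>F. real N ^ m * (1 - \<eta>))" by simp
      also have "\<dots> \<le> (\<Sum>u\<in>F. real (card {S\<in>SS. \<tau> \<le> real (dS m S u v)}))"
        by (rule sum_mono) (rule goodu)
      also have "\<dots> \<le> (\<Sum>u\<in>V. real (card {S\<in>SS. \<tau> \<le> real (dS m S u v)}))"
        by (rule sum_mono2[OF finV Fsub]) auto
      finally show ?thesis using swap by simp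
    qed
    have upper: "(\<Sum>S\<in>SS. real (card (G S (pat S)))) \<le> n * real (card T1) + real N ^ m * (\<delta>/4 * n)"
    proof -
      have "(\<Sum>S\<in>SS. real (card (G S (pat S)))) \<le> (\<Sum>S\<in>SS. n * (if S \<in> T1 then (1::real) else 0) + \<delta>/4 * n)"
      proof (rule sum_mono)
        fix S assume S: "S \<in> SS"
        have "card (G S (pat S)) \<le> n" unfolding n_def G_def by (rule card_mono[OF finV]) auto
        moreover have "S \<notin> T1 \<Longrightarrow> real (card (G S (pat S))) < \<delta>/4 * n" using S unfolding T1_def by auto
        moreover have "0 \<le> \<delta>/4 * n" using \<delta> by simp
        ultimately show "real (card (G S (pat S))) \<le> n * (if S \<in> T1 then (1::real) else 0) + \<delta>/4 * n"
          by (cases "S \<in> T1") auto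
      qed
      also have "\<dots> = n * (\<Sum>S\<in>SS. if S \<in> T1 then (1::real) else 0) + real (card SS) * (\<delta>/4 * n)"
        by (simp add: sum.distrib sum_distrib_left)
      finally have L: "(\<Sum>S\<in>SS. real (card (G S (pat S)))) \<le> n * (\<Sum>S\<in>SS. if S \<in> T1 then (1::real) else 0) + real (card SS) * (\<delta>/4 * n)" .
      have "(\<Sum>S\<in>SS. if S \<in> T1 then (1::real) else 0) = real (card T1)"
        using card_filter_sum[OF finSS, of "\<lambda>S. S \<in> T1"] unfolding T1_def by simp
      with L show ?thesis using cardSS by simp
    qed
    have "n * real (card T1) \<ge> n * (\<delta>/2 * real N ^ m)"
    proof -
      have "n * (\<delta>/2 * real N ^ m) \<le> \<delta> * n * (real N ^ m * (1 - \<eta>)) - real N ^ m * (\<delta>/4 * n)"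
      proof -
        have "0 \<le> \<delta> * n * real N ^ m * (1/4 - \<eta>)" using h1 \<delta> \<eta>_def by simp
        then show ?thesis by (simp add: algebra_simps)
      qed
      then show ?thesis using lower upper by linarith
    qed
    then have T1ge: "real (card T1) \<ge> \<delta>/2 * real N ^ m" using n0 by simp
    have "real (card T1) - real (card T2) \<le> real (card (T1 - T2))"
    proof -
      have fT: "finite ((T1 - T2) \<union> T2)" using finSS unfolding T1_def T2_def by auto
      have "card T1 \<le> card ((T1 - T2) \<union> T2)" by (rule card_mono[OF fT]) auto
      also have "\<dots> \<le> card (T1 - T2) + card T2" by (rule card_Un_le)
      finally have "card T1 \<le> card (T1 - T2) + card T2" .
      then show ?thesis by simp
    qed
    also have "\<dots> \<le> real (card {S\<in>SS. E S x})"
      by (simp add: card_mono[OF _ sub] finSS)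
    finally have "real (card {S\<in>SS. E S x}) \<ge> \<delta>/2 * real N ^ m - k * (real N ^ m * \<eta>)"
      using T1ge T2le by linarith
    moreover have "k * (real N ^ m * \<eta>) \<le> \<delta>/4 * real N ^ m"
      using mult_right_mono[OF h2, of "real N ^ m"] unfolding \<eta>_def by (simp add: algebra_simps)
    ultimately show ?thesis by linarith
  qed
  have bad_all: "\<exists>v\<in>V. \<forall>j<k. real (hamming (x j) v) < (c - \<epsilon>) * N" if x: "x \<in> XX" for x
  proof -
    have "\<not> (\<forall>v\<in>V. \<exists>j<k. real (hamming (x j) v) \<ge> (c - \<epsilon>) * N)" using contra x unfolding XX_def by blast
    then show ?thesis by (auto simp: not_le)
  qed
  have dbl: "(\<Sum>S\<in>SS. real (card {x\<in>XX. E S x})) = (\<Sum>x\<in>XX. real (card {S\<in>SS. E S x}))"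
  proof -
    have "(\<Sum>S\<in>SS. real (card {x\<in>XX. E S x})) = (\<Sum>S\<in>SS. \<Sum>x\<in>XX. if E S x then 1 else 0)"
      by (rule sum.cong) (auto simp: card_filter_sum[OF finXX])
    also have "\<dots> = (\<Sum>x\<in>XX. \<Sum>S\<in>SS. if E S x then 1 else 0)" by (rule sum.swap)
    also have "\<dots> = (\<Sum>x\<in>XX. real (card {S\<in>SS. E S x}))"
      by (rule sum.cong) (auto simp: card_filter_sum[OF finSS])
    finally show ?thesis .
  qed
  have "real (card XX) * (\<delta>/4 * real N ^ m) = (\<Sum>x\<in>XX. \<delta>/4 * real N ^ m)" by simp
  also have "\<dots> \<le> (\<Sum>x\<in>XX. real (card {S\<in>SS. E S x}))"
  proof (rule sum_mono)
    fix x assume x: "x \<in> XX"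
    then obtain v where "v \<in> V" "\<forall>j<k. real (hamming (x j) v) < (c - \<epsilon>) * N" using bad_all by blast
    then show "\<delta>/4 * real N ^ m \<le> real (card {S\<in>SS. E S x})" using claimB x by blast
  qed
  also have "\<dots> = (\<Sum>S\<in>SS. real (card {x\<in>XX. E S x}))" using dbl by simp
  also have "\<dots> \<le> (\<Sum>S\<in>SS. 2 ^ m * (n * (1 - \<delta>/4)) ^ k)" by (rule sum_mono) (rule claimA)
  also have "\<dots> = real (card SS) * (2 ^ m * (n * (1 - \<delta>/4)) ^ k)" by simp
  finally have "real n ^ k * real N ^ m * (\<delta>/4) \<le> real n ^ k * real N ^ m * (2 ^ m * (1 - \<delta>/4) ^ k)"
    unfolding cardXX cardSS power_mult_distrib by (simp add: mult_ac)
  moreover have "real n ^ k * real N ^ m > 0" using n0 N by simp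
  ultimately have "\<delta>/4 \<le> 2 ^ m * (1 - \<delta>/4) ^ k" by (rule mult_le_cancel_left_pos[THEN iffD1, rotated])
  with h3 show False by simp
qed



definition coefP :: "nat \<Rightarrow> nat \<Rightarrow> real" where
  "coefP i j = (if i = 4 \<and> j = 3 then 16384 else if i = 2 \<and> j = 4 then 4352 else
     if i = 0 \<and> j = 2 then 16 else if i = 0 \<and> j = 1 then 4 else if i = 0 \<and> j = 0 then 1 else 0)"

lemma bipoly_coefP: "bipoly 4 coefP a b = 16384 * a^4 * b^3 + 4352 * a^2 * b^4 + 16 * b^2 + 4 * b + 1"
  by (simp add: bipoly_def coefP_def numeral_eq_Suc atMost_Suc)

lemma exp_sq: "0 \<le> y \<Longrightarrow> y^2/4 \<le> exp (y::real)"
proof -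
  assume y: "0 \<le> y"
  have "y/2 \<le> exp (y/2)" using exp_ge_add_one_self[of "y/2"] by linarith
  then have "(y/2)^2 \<le> exp (y/2) ^ 2" using y by (intro power_mono) auto
  also have "exp (y/2) ^ 2 = exp y" by (simp flip: exp_of_nat_mult)
  finally show ?thesis by (simp add: power_divide)
qed

lemma params:
  fixes \<delta> \<epsilon> :: real assumes \<delta>: "0 < \<delta>" "\<delta> \<le> 1" and \<epsilon>: "\<epsilon> > 0"
  shows "\<exists>m k :: nat. exp (- real m * (\<epsilon>/2)^2/2) \<le> 1/4 \<and> real k * exp (- real m * (\<epsilon>/2)^2/2) \<le> \<delta>/4
     \<and> 2 ^ m * (1 - \<delta>/4) ^ k < \<delta>/4 \<and> real k \<le> bipoly 4 coefP (1/\<epsilon>) (1/\<delta>)"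
proof -
  define a where "a = 1/\<epsilon>"
  define b where "b = 1/\<delta>"
  have a0: "a > 0" unfolding a_def using \<epsilon> by simp
  have b1: "b \<ge> 1" unfolding b_def using \<delta> by simp
  define Y where "Y = 512 * a^2 * b^2 + 136 * b^3"
  have b3: "b^3 \<ge> 1" using b1 by simp
  have Y0: "Y \<ge> 136"
  proof -
    have "a^2 * b^2 \<ge> 0" by simp
    then show ?thesis unfolding Y_def using b3 by linarith
  qed
  define m where "m = nat \<lceil>8 * a^2 * Y\<rceil>"
  have r0: "0 \<le> 8 * a^2 * Y" using Y0 by simp
  have mc: "real m = of_int \<lceil>8 * a^2 * Y\<rceil>" unfolding m_def using r0 by simp
  have mge: "real m \<ge> 8 * a^2 * Y" unfolding mc by simp
  have mle: "real m \<le> 8 * a^2 * Y + 1" unfolding mc by simp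
  define y where "y = real m * (\<epsilon>/2)^2/2"
  have ae: "a^2 * \<epsilon>^2 = 1" unfolding a_def using \<epsilon> by (simp add: power_divide)
  have my: "real m = 8 * a^2 * y" unfolding y_def using ae by (simp add: power_divide algebra_simps)
  have yY: "y \<ge> Y"
  proof -
    have "8 * a^2 * Y \<le> 8 * a^2 * y" using mge my by simp
    then show ?thesis using a0 by simp
  qed
  define k where "k = nat \<lceil>4 * b * (real m + 4 * b)\<rceil>"
  have k0: "0 \<le> 4 * b * (real m + 4 * b)" using b1 by simp
  have kc: "real k = of_int \<lceil>4 * b * (real m + 4 * b)\<rceil>" unfolding k_def using k0 by simp
  have kge: "real k \<ge> 4 * b * (real m + 4 * b)" unfolding kc by simp
  have kle: "real k \<le> 4 * b * (real m + 4 * b) + 1" unfolding kc by simp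
  have ey: "exp (- real m * (\<epsilon>/2)^2/2) = exp (- y)" unfolding y_def by simp
  have h1: "exp (- y) \<le> 1/4"
  proof -
    have "1 + y \<le> exp y" by simp
    then have "4 \<le> exp y" using Y0 yY by linarith
    then show ?thesis by (simp add: exp_minus field_simps)
  qed
  have h2: "real k * exp (- y) \<le> \<delta>/4"
  proof -
    have "4 * b * real k \<le> 4 * b * (4 * b * (8 * a^2 * y + 4 * b) + 1)"
      using kle my b1 by (intro mult_left_mono) auto
    also have "\<dots> = 128 * a^2 * b^2 * y + 64 * b^3 + 4 * b" by (simp add: algebra_simps power2_eq_square power3_eq_cube)
    also have "\<dots> \<le> y^2/4"
    proof -
      have "y^2/4 = y * (y/4)" by (simp add: power2_eq_square)
      also have "y/4 \<ge> 128 * a^2 * b^2 + 34 * b^3" using yY unfolding Y_def by simp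
      then have "y * (y/4) \<ge> y * (128 * a^2 * b^2 + 34 * b^3)" using Y0 yY by (intro mult_left_mono) auto
      moreover have "34 * b^3 * y \<ge> 64 * b^3 + 4 * b"
      proof -
        have bb: "1 * 1 \<le> b * b" using b1 by (intro mult_mono) auto
        have "b * 1 \<le> b * (b * b)" using bb b1 by (intro mult_left_mono) auto
        then have "b^3 \<ge> b" by (simp add: power3_eq_cube)
        moreover have "b^3 \<ge> 1" using b1 by simp
        moreover have "34 * b^3 * y \<ge> 34 * b^3 * 136" using yY Y0 b1 by (intro mult_left_mono) auto
        ultimately show ?thesis by linarith
      qed
      ultimately show ?thesis by (simp add: algebra_simps)
    qed
    also have "\<dots> \<le> exp y" using exp_sq Y0 yY by simp
    finally have "4 * b * real k \<le> exp y" .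
    then have "real k \<le> exp y * \<delta> / 4" unfolding b_def using \<delta> by (simp add: field_simps)
    then show ?thesis by (simp add: exp_minus field_simps)
  qed
  have h3: "2 ^ m * (1 - \<delta>/4) ^ k < \<delta>/4"
  proof -
    have "(1 - \<delta>/4) ^ k \<le> exp (-\<delta>/4) ^ k"
      using exp_ge_add_one_self[of "-\<delta>/4"] \<delta> by (intro power_mono) auto
    also have "\<dots> = exp (- (\<delta>/4) * k)" by (simp add: exp_of_nat_mult[symmetric] mult.commute)
    also have "\<dots> \<le> exp (- (real m + 4 * b))"
    proof -
      have "\<delta>/4 * k \<ge> \<delta>/4 * (4 * b * (real m + 4 * b))" using kge \<delta> by (intro mult_left_mono) auto
      also have "\<delta>/4 * (4 * b * (real m + 4 * b)) = real m + 4 * b" unfolding b_def using \<delta> by simp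
      finally show ?thesis by simp
    qed
    finally have A: "(1 - \<delta>/4) ^ k \<le> exp (- (real m + 4 * b))" .
    have B: "(2::real) ^ m \<le> exp (real m)"
    proof -
      have "(2::real) \<le> exp 1" using exp_ge_add_one_self[of 1] by simp
      then have "(2::real) ^ m \<le> exp 1 ^ m" by (intro power_mono) auto
      also have "\<dots> = exp (real m)" by (simp flip: exp_of_nat_mult)
      finally show ?thesis .
    qed
    have "2 ^ m * (1 - \<delta>/4) ^ k \<le> exp (real m) * exp (- (real m + 4 * b))"
      using A B \<delta> by (intro mult_mono) auto
    also have "\<dots> = exp (- (4 * b))" by (simp flip: exp_add)
    also have "\<dots> < 1 / (4 * b)"
      using exp_gt_self[of "4*b"] b1 by (simp add: exp_minus field_simps)
    also have "1 / (4 * b) = \<delta>/4" unfolding b_def by simp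
    finally show ?thesis .
  qed
  have kb: "real k \<le> bipoly 4 coefP (1/\<epsilon>) (1/\<delta>)"
  proof -
    have "real k \<le> 4 * b * ((8 * a^2 * Y + 1) + 4 * b) + 1"
    proof -
      have "4 * b * (real m + 4 * b) \<le> 4 * b * ((8 * a^2 * Y + 1) + 4 * b)"
        using mle b1 by (intro mult_left_mono) auto
      then show ?thesis using kle by linarith
    qed
    also have "\<dots> = 16384 * a^4 * b^3 + 4352 * a^2 * b^4 + 16 * b^2 + 4 * b + 1"
      unfolding Y_def by (simp add: algebra_simps power2_eq_square power3_eq_cube power4_eq_xxxx)
    finally show ?thesis unfolding bipoly_coefP a_def b_def .
  qed
  show ?thesis using h1 h2 h3 kb unfolding ey[symmetric] by blast
qed


theorem lemma1p4:
  shows "\<exists>(d::nat) (coef::nat \<Rightarrow> nat \<Rightarrow> real).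
    \<forall>(N::nat) (c::real) (\<delta>::real) (\<epsilon>::real) (V::bool list set).
      N \<ge> 1 \<longrightarrow> 0 < \<delta> \<longrightarrow> \<delta> \<le> 1 \<longrightarrow> \<epsilon> > 0 \<longrightarrow>
      V \<noteq> {} \<longrightarrow> V \<subseteq> {xs. length xs = N} \<longrightarrow>
      (\<forall>v\<in>V. real (card {u\<in>V. real (hamming v u) \<ge> c * real N}) \<ge> \<delta> * real (card V)) \<longrightarrow>
      (\<exists>X\<subseteq>V. real (card X) \<le> bipoly d coef (1/\<epsilon>) (1/\<delta>) \<and>
         (\<forall>v\<in>V. \<exists>x\<in>X. real (hamming x v) \<ge> (c - \<epsilon>) * real N))"
proof (rule exI[of _ 4], rule exI[of _ coefP], intro allI impI)
  fix N :: nat and c \<delta> \<epsilon> :: real and V :: "bool list set"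
  assume N: "N \<ge> 1" and \<delta>: "0 < \<delta>" and \<delta>1: "\<delta> \<le> 1" and \<epsilon>: "\<epsilon> > 0" and Vne: "V \<noteq> {}"
    and VN: "V \<subseteq> {xs. length xs = N}"
    and far: "\<forall>v\<in>V. real (card {u\<in>V. real (hamming v u) \<ge> c * real N}) \<ge> \<delta> * real (card V)"
  obtain m k :: nat where h1: "exp (- real m * (\<epsilon>/2)^2/2) \<le> 1/4"
    and h2: "real k * exp (- real m * (\<epsilon>/2)^2/2) \<le> \<delta>/4"
    and h3: "2 ^ m * (1 - \<delta>/4) ^ k < \<delta>/4" and kb: "real k \<le> bipoly 4 coefP (1/\<epsilon>) (1/\<delta>)"
    using params[OF \<delta> \<delta>1 \<epsilon>] by blast
  obtain x where x: "x \<in> PiE {..<k} (\<lambda>_. V)"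
    and good: "\<forall>v\<in>V. \<exists>j<k. real (hamming (x j) v) \<ge> (c - \<epsilon>) * N"
    using main_count[OF N VN Vne \<delta> \<delta>1 \<epsilon> far h1 h2 h3] by blast
  show "\<exists>X\<subseteq>V. real (card X) \<le> bipoly 4 coefP (1/\<epsilon>) (1/\<delta>) \<and>
         (\<forall>v\<in>V. \<exists>x\<in>X. real (hamming x v) \<ge> (c - \<epsilon>) * real N)"
  proof (intro exI conjI)
    show "x ` {..<k} \<subseteq> V" using x by (auto simp: PiE_def Pi_def)
    have "card (x ` {..<k}) \<le> k" using card_image_le[of "{..<k}" x] by simp
    then show "real (card (x ` {..<k})) \<le> bipoly 4 coefP (1/\<epsilon>) (1/\<delta>)" using kb by linarith
    show "\<forall>v\<in>V. \<exists>y\<in>x ` {..<k}. real (hamming y v) \<ge> (c - \<epsilon>) * real N" using good by blast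
  qed
qed

end
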